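(* Let $\mathcal D[t]\subset\mathcal H\subset\mathcal D^\times[t^\times]$ be a rigged Hilbert space with $\mathcal D[t]$ reflexive, and take $(X,\mu)=(\mathbb N,\gamma)$ with $\gamma$ the counting measure. Let $\omega:n\in\mathbb N\mapsto\omega_n\in\mathcal D^\times$ be a bounded Bessel distribution map (resp. a distribution frame). Then for each $n$ the conjugate linear functional $\omega_n$ is bounded with respect to the norm of $\mathcal H$, hence $\omega_n\in\mathcal H$, and $\{\omega_n\}_{n\in\mathbb N}$ is a Bessel sequence (resp. a frame) of $\mathcal H$, i.e. $\sum_n|\langle f,\omega_n\rangle|^2\le B\|f\|^2$ (resp. $A\|f\|^2\le\sum_n|\langle f,\omega_n\rangle|^2\le B\|f\|^2$) for all $f\in\mathcal H$, with the same bounds.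
   Context: A rigged Hilbert space $\mathcal D[t]\subset\mathcal H\subset\mathcal D^\times[t^\times]$: $\mathcal H$ is a Hilbert space with inner product $\langle\cdot,\cdot\rangle$ and norm $\|\cdot\|$; $\mathcal D$ is a dense subspace of $\mathcal H$ with a locally convex topology $t$ finer than the norm topology; $\mathcal D^\times$ is the space of continuous conjugate linear functionals on $\mathcal D[t]$ with the strong dual topology; $\mathcal H$ is identified with a subspace of $\mathcal D^\times$, and the duality pairing between $\mathcal D^\times$ and $\mathcal D$, also written $\langle\cdot,\cdot\rangle$, extends the inner product; $\langle f,F\rangle:=\overline{\langle F,f\rangle}$ for $f\in\mathcal D$, $F\in\mathcal D^\times$. A map $\omega:X\to\mathcal D^\times$ is weakly measurable if $x\mapsto\langle f,\omega_x\rangle$ is $\mu$-measurable for each $f\in\mathcal D$. It is a bounded Bessel distribution map if there is $B>0$ with $\int_X|\langle f,\omega_x\rangle|^2d\mu\le B\|f\|^2$ for all $f\in\mathcal D$; it is a distribution frame if additionally there is $A>0$ with $A\|f\|^2\le\int_X|\langle f,\omega_x\rangle|^2d\mu$ for all $f\in\mathcal D$. *)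

theory Defs
  imports "HOL-Analysis.Analysis"
begin

class complex_vector = real_vector +
  fixes scaleC :: "complex \<Rightarrow> 'a \<Rightarrow> 'a" (infixr \<open>*\<^sub>C\<close> 75)
  assumes scaleC_add_right: "a *\<^sub>C (x + y) = a *\<^sub>C x + a *\<^sub>C y"
    and scaleC_add_left: "(a + b) *\<^sub>C x = a *\<^sub>C x + b *\<^sub>C x"
    and scaleC_scaleC: "a *\<^sub>C (b *\<^sub>C x) = (a * b) *\<^sub>C x"
    and scaleC_one: "1 *\<^sub>C x = x"
    and scaleR_scaleC: "scaleR r x = complex_of_real r *\<^sub>C x"

text \<open>Complex inner product space; the inner product is linear in the first
  and conjugate linear in the second argument.\<close>
class complex_inner = complex_vector + real_normed_vector +
  fixes cinner :: "'a \<Rightarrow> 'a \<Rightarrow> complex"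
  assumes cinner_commute: "cinner x y = cnj (cinner y x)"
    and cinner_add_left: "cinner (x + y) z = cinner x z + cinner y z"
    and cinner_scaleC_left: "cinner (a *\<^sub>C x) y = a * cinner x y"
    and cinner_self_real: "Im (cinner x x) = 0"
    and cinner_self_nonneg: "0 \<le> Re (cinner x x)"
    and cinner_self_eq_zero: "cinner x x = 0 \<longleftrightarrow> x = 0"
    and norm_eq_sqrt_cinner: "norm x = sqrt (Re (cinner x x))"

text \<open>The locally convex topology t on D is given by a family P of seminorms on D.\<close>

definition csubspace :: "'h::complex_vector set \<Rightarrow> bool" where
  "csubspace D \<longleftrightarrow> 0 \<in> D \<and> (\<forall>x\<in>D. \<forall>y\<in>D. x + y \<in> D) \<and> (\<forall>c. \<forall>x\<in>D. c *\<^sub>C x \<in> D)"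

definition cseminorm_on :: "'h::complex_vector set \<Rightarrow> ('h \<Rightarrow> real) \<Rightarrow> bool" where
  "cseminorm_on D p \<longleftrightarrow> (\<forall>x\<in>D. 0 \<le> p x) \<and> (\<forall>x\<in>D. \<forall>y\<in>D. p (x + y) \<le> p x + p y)
     \<and> (\<forall>c. \<forall>x\<in>D. p (c *\<^sub>C x) = cmod c * p x)"

text \<open>A seminorm-like function q is continuous on D[t] iff it is dominated by a
  multiple of a finite sum of seminorms from P.\<close>
definition t_dominated :: "('h \<Rightarrow> real) set \<Rightarrow> 'h set \<Rightarrow> ('h \<Rightarrow> real) \<Rightarrow> bool" where
  "t_dominated P D q \<longleftrightarrow> (\<exists>F C. finite F \<and> F \<subseteq> P \<and> (\<forall>x\<in>D. q x \<le> C * (\<Sum>p\<in>F. p x)))"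

definition conj_linear_on :: "'h::complex_vector set \<Rightarrow> ('h \<Rightarrow> complex) \<Rightarrow> bool" where
  "conj_linear_on D F \<longleftrightarrow> (\<forall>x\<in>D. \<forall>y\<in>D. F (x + y) = F x + F y)
     \<and> (\<forall>c. \<forall>x\<in>D. F (c *\<^sub>C x) = cnj c * F x)"

text \<open>D^x: continuous conjugate linear functionals on D[t] (extended by 0 outside D).
  For F \<in> D^x and f \<in> D the pairing is \<langle>F,f\<rangle> = F f and \<langle>f,F\<rangle> = cnj (F f).\<close>
definition dual_space :: "('h \<Rightarrow> real) set \<Rightarrow> 'h::complex_vector set \<Rightarrow> ('h \<Rightarrow> complex) set" where
  "dual_space P D = {F. conj_linear_on D F \<and> t_dominated P D (\<lambda>x. cmod (F x)) \<and> (\<forall>x. x \<notin> D \<longrightarrow> F x = 0)}"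

definition rigged_hilbert_space ::
  "'h::{complex_inner, complete_space} set \<Rightarrow> ('h \<Rightarrow> real) set \<Rightarrow> bool" where
  "rigged_hilbert_space D P \<longleftrightarrow> csubspace D \<and> closure D = UNIV
     \<and> (\<forall>p\<in>P. cseminorm_on D p) \<and> t_dominated P D norm"

definition t_bounded :: "('h \<Rightarrow> real) set \<Rightarrow> 'h set \<Rightarrow> 'h set \<Rightarrow> bool" where
  "t_bounded P D B \<longleftrightarrow> B \<subseteq> D \<and> (\<forall>p\<in>P. bdd_above (p ` B))"

text \<open>Strongly bounded subsets of D^x (bounded for the strong dual topology,
  i.e. uniformly bounded on every bounded subset of D[t]).\<close>
definition strongly_bounded :: "('h::complex_vector \<Rightarrow> real) set \<Rightarrow> 'h set \<Rightarrow> ('h \<Rightarrow> complex) set \<Rightarrow> bool" where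
  "strongly_bounded P D M \<longleftrightarrow> M \<subseteq> dual_space P D \<and>
     (\<forall>B. t_bounded P D B \<longrightarrow> bdd_above {cmod (F f) | F f. F \<in> M \<and> f \<in> B})"

text \<open>Linear functionals on D^x continuous for the strong dual topology, whose
  seminorms are F \<mapsto> sup over f \<in> B of |F f|, B bounded in D[t].\<close>
definition strong_dual_continuous ::
  "('h \<Rightarrow> real) set \<Rightarrow> 'h::complex_vector set \<Rightarrow> (('h \<Rightarrow> complex) \<Rightarrow> complex) \<Rightarrow> bool" where
  "strong_dual_continuous P D \<Phi> \<longleftrightarrow>
     (\<forall>F\<in>dual_space P D. \<forall>G\<in>dual_space P D. \<Phi> (\<lambda>x. F x + G x) = \<Phi> F + \<Phi> G)
   \<and> (\<forall>c. \<forall>F\<in>dual_space P D. \<Phi> (\<lambda>x. c * F x) = c * \<Phi> F)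
   \<and> (\<exists>Bs C. finite Bs \<and> (\<forall>B\<in>Bs. B \<noteq> {} \<and> t_bounded P D B) \<and>
        (\<forall>F\<in>dual_space P D. cmod (\<Phi> F) \<le> C * (\<Sum>B\<in>Bs. SUP f\<in>B. cmod (F f))))"

text \<open>D[t] is reflexive: the canonical map f \<mapsto> (F \<mapsto> F f) from D onto the strong
  bidual is surjective and a topological isomorphism, i.e. the topology t coincides
  with the topology of uniform convergence on strongly bounded subsets of D^x.\<close>
definition reflexive_lcs :: "('h \<Rightarrow> real) set \<Rightarrow> 'h::complex_vector set \<Rightarrow> bool" where
  "reflexive_lcs P D \<longleftrightarrow>
     (\<forall>\<Phi>. strong_dual_continuous P D \<Phi> \<longrightarrow> (\<exists>f\<in>D. \<forall>F\<in>dual_space P D. \<Phi> F = F f))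
   \<and> (\<forall>M. strongly_bounded P D M \<and> M \<noteq> {} \<longrightarrow> t_dominated P D (\<lambda>f. SUP F\<in>M. cmod (F f)))
   \<and> (\<forall>p\<in>P. \<exists>Ms C. finite Ms \<and> (\<forall>M\<in>Ms. M \<noteq> {} \<and> strongly_bounded P D M) \<and>
        (\<forall>f\<in>D. p f \<le> C * (\<Sum>M\<in>Ms. SUP F\<in>M. cmod (F f))))"

text \<open>The pairing <f, omega_x> is cnj (omega x f).\<close>
definition bessel_distribution_map ::
  "('h \<Rightarrow> real) set \<Rightarrow> 'h::complex_inner set \<Rightarrow> 'x measure \<Rightarrow> ('x \<Rightarrow> 'h \<Rightarrow> complex) \<Rightarrow> real \<Rightarrow> bool" where
  "bessel_distribution_map P D M \<omega> B \<longleftrightarrow>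
     (\<forall>x\<in>space M. \<omega> x \<in> dual_space P D)
   \<and> (\<forall>f\<in>D. (\<lambda>x. cnj (\<omega> x f)) \<in> borel_measurable M)
   \<and> B > 0
   \<and> (\<forall>f\<in>D. (\<integral>\<^sup>+x. ennreal ((cmod (cnj (\<omega> x f)))\<^sup>2) \<partial>M) \<le> ennreal (B * (norm f)\<^sup>2))"

definition distribution_frame ::
  "('h \<Rightarrow> real) set \<Rightarrow> 'h::complex_inner set \<Rightarrow> 'x measure \<Rightarrow> ('x \<Rightarrow> 'h \<Rightarrow> complex) \<Rightarrow> real \<Rightarrow> real \<Rightarrow> bool" where
  "distribution_frame P D M \<omega> A B \<longleftrightarrow> bessel_distribution_map P D M \<omega> B \<and> A > 0
   \<and> (\<forall>f\<in>D. ennreal (A * (norm f)\<^sup>2) \<le> (\<integral>\<^sup>+x. ennreal ((cmod (cnj (\<omega> x f)))\<^sup>2) \<partial>M))"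

definition bessel_sequence :: "(nat \<Rightarrow> 'h::complex_inner) \<Rightarrow> real \<Rightarrow> bool" where
  "bessel_sequence h B \<longleftrightarrow> (\<forall>f. summable (\<lambda>n. (cmod (cinner f (h n)))\<^sup>2)
      \<and> (\<Sum>n. (cmod (cinner f (h n)))\<^sup>2) \<le> B * (norm f)\<^sup>2)"

definition frame_sequence :: "(nat \<Rightarrow> 'h::complex_inner) \<Rightarrow> real \<Rightarrow> real \<Rightarrow> bool" where
  "frame_sequence h A B \<longleftrightarrow> bessel_sequence h B
      \<and> (\<forall>f. A * (norm f)\<^sup>2 \<le> (\<Sum>n. (cmod (cinner f (h n)))\<^sup>2))"

end

theory Submission imports Defs begin

lemma scaleC_zero_right[simp]: "a *\<^sub>C (0::'a::complex_vector) = 0"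
  by (metis add_cancel_right_right scaleC_add_right)
lemma scaleC_zero_left[simp]: "(0::complex) *\<^sub>C (x::'a::complex_vector) = 0"
  by (metis add_cancel_right_right add.right_neutral scaleC_add_left)
lemma scaleC_minus_right: "a *\<^sub>C (- (x::'a::complex_vector)) = - (a *\<^sub>C x)"
  by (metis add.right_inverse add_eq_0_iff2 scaleC_add_right scaleC_zero_right)
lemma scaleC_diff_right: "a *\<^sub>C ((x::'a::complex_vector) - y) = a *\<^sub>C x - a *\<^sub>C y"
  by (metis diff_conv_add_uminus scaleC_add_right scaleC_minus_right)
lemma scaleC_minus_left: "(- a) *\<^sub>C (x::'a::complex_vector) = - (a *\<^sub>C x)"
  by (metis add.right_inverse add_eq_0_iff2 scaleC_add_left scaleC_zero_left)
lemma scaleC_diff_left: "(a - b) *\<^sub>C (x::'a::complex_vector) = a *\<^sub>C x - b *\<^sub>C x"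
  by (metis diff_conv_add_uminus scaleC_add_left scaleC_minus_left)
lemma minus_scaleC: "- (x::'a::complex_vector) = (-1) *\<^sub>C x"
  by (simp add: scaleC_minus_left scaleC_one)

lemma cinner_zero_left[simp]: "cinner 0 (y::'a::complex_inner) = 0"
  by (metis add_cancel_right_right cinner_add_left add_0)
lemma cinner_add_right: "cinner (x::'a::complex_inner) (y + z) = cinner x y + cinner x z"
  by (metis cinner_add_left cinner_commute complex_cnj_add)
lemma cinner_scaleC_right: "cinner (x::'a::complex_inner) (a *\<^sub>C y) = cnj a * cinner x y"
  by (metis cinner_commute cinner_scaleC_left complex_cnj_mult)
lemma cinner_zero_right[simp]: "cinner (x::'a::complex_inner) 0 = 0"
  by (metis cinner_commute cinner_zero_left complex_cnj_zero)
lemma cinner_minus_left: "cinner (- (x::'a::complex_inner)) y = - cinner x y"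
  by (simp add: minus_scaleC cinner_scaleC_left)
lemma cinner_minus_right: "cinner (x::'a::complex_inner) (- y) = - cinner x y"
  by (simp add: minus_scaleC cinner_scaleC_right)
lemma cinner_diff_left: "cinner ((x::'a::complex_inner) - y) z = cinner x z - cinner y z"
  by (metis diff_conv_add_uminus cinner_add_left cinner_minus_left)
lemma cinner_diff_right: "cinner (x::'a::complex_inner) (y - z) = cinner x y - cinner x z"
  by (metis diff_conv_add_uminus cinner_add_right cinner_minus_right)

lemma cinner_self: "cinner (x::'a::complex_inner) x = complex_of_real ((norm x)\<^sup>2)"
  by (simp add: norm_eq_sqrt_cinner cinner_self_nonneg complex_eq_iff cinner_self_real)
lemma norm_sq: "(norm (x::'a::complex_inner))\<^sup>2 = Re (cinner x x)"
  by (simp add: cinner_self)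

lemma norm_scaleC: "norm (a *\<^sub>C (x::'a::complex_inner)) = cmod a * norm x"
proof -
  have "cinner (a *\<^sub>C x) (a *\<^sub>C x) = (a * cnj a) * cinner x x"
    by (simp add: cinner_scaleC_left cinner_scaleC_right mult.assoc)
  also have "\<dots> = complex_of_real ((cmod a)\<^sup>2 * (norm x)\<^sup>2)"
    by (simp add: complex_norm_square[symmetric] cinner_self)
  finally have e: "cinner (a *\<^sub>C x) (a *\<^sub>C x) = complex_of_real ((cmod a)\<^sup>2 * (norm x)\<^sup>2)" .
  have "(norm (a *\<^sub>C x))\<^sup>2 = Re (cinner (a *\<^sub>C x) (a *\<^sub>C x))" by (rule norm_sq)
  also have "\<dots> = (cmod a * norm x)\<^sup>2" unfolding e by (simp add: power_mult_distrib)
  finally have "(norm (a *\<^sub>C x))\<^sup>2 = (cmod a * norm x)\<^sup>2" .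
  thus ?thesis by (simp add: power2_eq_iff_nonneg)
qed

lemma norm_add_sq: "(norm ((x::'a::complex_inner) + y))\<^sup>2 = (norm x)\<^sup>2 + (norm y)\<^sup>2 + 2 * Re (cinner x y)"
proof -
  have "Re (cinner y x) = Re (cinner x y)" by (metis cinner_commute complex_cnj_cancel_iff complex_cnj_cnj cnj.sel(1))
  thus ?thesis unfolding norm_sq by (simp add: cinner_add_left cinner_add_right)
qed

lemma parallelogram: "(norm ((x::'a::complex_inner) + y))\<^sup>2 + (norm (x - y))\<^sup>2 = 2*(norm x)\<^sup>2 + 2*(norm y)\<^sup>2"
  using norm_add_sq[of x y] norm_add_sq[of x "-y"] by (simp add: cinner_minus_right)


lemma riesz:
  fixes psi :: "'a::{complex_inner,complete_space} \<Rightarrow> complex"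
  assumes add: "\<And>x y. psi (x+y) = psi x + psi y"
    and sc: "\<And>c x. psi (c *\<^sub>C x) = c * psi x"
    and bnd: "\<And>x. cmod (psi x) \<le> K * norm x"
  shows "\<exists>h. \<forall>x. psi x = cinner x h"
proof (cases "\<forall>x. psi x = 0")
  case True thus ?thesis by (intro exI[of _ 0]) simp
next
  case False
  then obtain x0 where x0: "psi x0 \<noteq> 0" by blast
  have psi0: "psi 0 = 0" using sc[of 0 0] by simp
  have psidiff: "psi (x - y) = psi x - psi y" for x y
    using add[of "x-y" y] by simp
  define S where "S = {Re (psi x) | x. norm x \<le> 1}"
  define M where "M = Sup S"
  have Kpos: "K > 0"
    using bnd[of x0] x0 by (smt (verit, best) mult_nonpos_nonneg norm_ge_zero zero_less_norm_iff)
  have Sne: "S \<noteq> {}" unfolding S_def by (auto intro!: exI[of _ 0])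
  have Sbdd: "bdd_above S" unfolding S_def
  proof (rule bdd_aboveI[of _ K], clarify)
    fix x :: 'a assume "norm x \<le> 1"
    have "Re (psi x) \<le> cmod (psi x)" by (rule complex_Re_le_cmod)
    also have "\<dots> \<le> K * norm x" by (rule bnd)
    also have "\<dots> \<le> K" using \<open>norm x \<le> 1\<close> Kpos by (simp add: mult_left_le)
    finally show "Re (psi x) \<le> K" .
  qed
  have inS: "norm x \<le> 1 \<Longrightarrow> Re (psi x) \<le> M" for x
    unfolding M_def by (rule cSup_upper[OF _ Sbdd]) (auto simp: S_def)
  have key: "Re (psi w) \<le> M * norm w" for w
  proof (cases "w = 0")
    case True thus ?thesis using psi0 by simp
  next
    case False
    define x where "x = complex_of_real (1 / norm w) *\<^sub>C w"
    have "norm x = 1" using False by (simp add: x_def norm_scaleC norm_divide)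
    hence "Re (psi x) \<le> M" by (intro inS) simp
    moreover have "Re (psi x) = Re (psi w) / norm w" by (simp add: x_def sc)
    ultimately show ?thesis using False by (simp add: divide_le_eq mult.commute)
  qed
  have key2: "cmod (psi w) \<le> M * norm w" for w
  proof (cases "psi w = 0")
    case True thus ?thesis using key[of 0] psi0
      by (metis key mult_nonneg_nonneg norm_ge_zero norm_zero order_trans zero_complex.simps(1))
  next
    case False
    define c where "c = cnj (psi w) / complex_of_real (cmod (psi w))"
    have sq: "cnj (psi w) * psi w = complex_of_real (cmod (psi w)) * complex_of_real (cmod (psi w))"
      by (metis complex_norm_square mult.commute of_real_mult power2_eq_square)
    have "psi (c *\<^sub>C w) = cnj (psi w) * psi w / complex_of_real (cmod (psi w))"
      by (simp add: sc c_def)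
    also have "\<dots> = complex_of_real (cmod (psi w))" using False unfolding sq by simp
    finally have "psi (c *\<^sub>C w) = complex_of_real (cmod (psi w))" .
    moreover have "norm (c *\<^sub>C w) = norm w" using False by (simp add: norm_scaleC c_def norm_divide)
    ultimately show ?thesis using key[of "c *\<^sub>C w"] by simp
  qed
  have Mpos: "M > 0"
    using key2[of x0] x0 by (smt (verit) mult_nonpos_nonneg norm_ge_zero zero_less_norm_iff)
  have "\<exists>x. norm x \<le> 1 \<and> M - 1 / real (Suc k) < Re (psi x)" for k
  proof -
    have "M - 1 / real (Suc k) < Sup S" unfolding M_def[symmetric] by simp
    then obtain y where "y \<in> S" "M - 1 / real (Suc k) < y" using less_cSup_iff[OF Sne Sbdd] by blast
    thus ?thesis unfolding S_def by blast
  qed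
  then obtain xs where xs1: "\<And>k. norm (xs k) \<le> 1" and xs2: "\<And>k. M - 1 / real (Suc k) < Re (psi (xs k))"
    by metis
  have dist_bd: "(norm (xs j - xs k))\<^sup>2 \<le> 4 * ((1 / real (Suc j) + 1 / real (Suc k)) / M)" for j k
  proof -
    define a where "a = norm (xs j + xs k)"
    define d where "d = (1 / real (Suc j) + 1 / real (Suc k)) / M"
    have "Re (psi (xs j + xs k)) \<le> M * a" unfolding a_def by (rule key)
    hence "2 * M - M * d < M * a" using xs2[of j] xs2[of k] Mpos by (simp add: add d_def)
    hence "M * 2 < M * (a + d)" using Mpos by (simp add: algebra_simps)
    hence "2 < a + d" using Mpos by (simp add: mult_less_cancel_left_pos)
    hence ad: "2 - d < a" by linarith
    have a2: "a \<le> 2" unfolding a_def using xs1[of j] xs1[of k] norm_triangle_ineq[of "xs j" "xs k"] by linarith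
    have a0: "0 \<le> a" unfolding a_def by simp
    have "(norm (xs j - xs k))\<^sup>2 = 2*(norm (xs j))\<^sup>2 + 2*(norm (xs k))\<^sup>2 - a\<^sup>2"
      using parallelogram[of "xs j" "xs k"] unfolding a_def by simp
    also have "\<dots> \<le> 4 - a\<^sup>2"
      using power_mono[OF xs1[of j] norm_ge_zero, of 2] power_mono[OF xs1[of k] norm_ge_zero, of 2] by simp
    also have "\<dots> = (2 - a) * (2 + a)" by (simp add: power2_eq_square algebra_simps)
    also have "\<dots> \<le> d * 4" using ad a2 a0 by (intro mult_mono) auto
    finally show ?thesis unfolding d_def by simp
  qed
  have "Cauchy xs"
  proof (rule metric_CauchyI)
    fix e :: real assume e: "0 < e"
    obtain N0 where N0: "8 / (M * e\<^sup>2) < real N0" using reals_Archimedean2 by blast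
    define N where "N = Suc N0"
    have N: "8 / (M * e\<^sup>2) < real N" using N0 unfolding N_def by simp
    have Npos: "0 < real N" unfolding N_def by simp
    have Me: "0 < M * e\<^sup>2" using Mpos e by simp
    have "8 < real N * (M * e\<^sup>2)" using N Me by (simp add: divide_less_eq)
    hence fin: "8 / (M * real N) < e\<^sup>2" using Mpos Npos by (simp add: divide_less_eq mult.commute mult.left_commute)
    show "\<exists>N. \<forall>m\<ge>N. \<forall>n\<ge>N. dist (xs m) (xs n) < e"
    proof (intro exI[of _ N] allI impI)
      fix m n assume mn: "N \<le> m" "N \<le> n"
      have i1: "1 / real (Suc m) \<le> 1 / real N" using mn Npos by (intro divide_left_mono) auto
      have i2: "1 / real (Suc n) \<le> 1 / real N" using mn Npos by (intro divide_left_mono) auto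
      have "(dist (xs m) (xs n))\<^sup>2 \<le> 4 * ((1 / real (Suc m) + 1 / real (Suc n)) / M)"
        using dist_bd[of m n] by (simp add: dist_norm)
      also have "\<dots> \<le> 4 * ((2 / real N) / M)"
        using i1 i2 Mpos by (intro mult_left_mono divide_right_mono) auto
      also have "\<dots> = 8 / (M * real N)" by simp
      also have "\<dots> < e\<^sup>2" by (rule fin)
      finally show "dist (xs m) (xs n) < e"
        using power2_less_imp_less e less_imp_le by blast
    qed
  qed
  then obtain u where u: "xs \<longlonglongrightarrow> u" using Cauchy_convergent_iff convergent_def by blast
  have nu1: "norm u \<le> 1"
    using tendsto_norm[OF u] xs1 by (intro LIMSEQ_le_const2) auto
  have psilim: "(\<lambda>k. psi (xs k)) \<longlonglongrightarrow> psi u"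
  proof -
    have "(\<lambda>k. K * norm (xs k - u)) \<longlonglongrightarrow> 0"
      using tendsto_mult_right_zero[OF tendsto_norm_zero[OF LIM_zero[OF u]]] by simp
    hence "(\<lambda>k. psi (xs k) - psi u) \<longlonglongrightarrow> 0"
      by (rule Lim_null_comparison[rotated]) (simp add: bnd flip: psidiff)
    thus ?thesis by (simp add: LIM_zero_iff)
  qed
  have relim: "(\<lambda>k. Re (psi (xs k))) \<longlonglongrightarrow> M"
  proof (rule tendsto_sandwich[of "\<lambda>k. M - 1 / real (Suc k)" _ _ "\<lambda>k. M"])
    show "\<forall>\<^sub>F n in sequentially. M - 1 / real (Suc n) \<le> Re (psi (xs n))"
      using xs2 by (simp add: less_imp_le)
    show "\<forall>\<^sub>F n in sequentially. Re (psi (xs n)) \<le> M" using inS xs1 by simp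
    show "(\<lambda>k. M - 1 / real (Suc k)) \<longlonglongrightarrow> M"
      using tendsto_diff[OF tendsto_const[of M] LIMSEQ_inverse_real_of_nat] by (simp add: inverse_eq_divide)
  qed simp
  have ReM: "Re (psi u) = M" using LIMSEQ_unique[OF tendsto_Re[OF psilim] relim] .
  have nu: "norm u = 1" using key[of u] ReM Mpos nu1 by simp
  have psiu: "psi u = complex_of_real M"
  proof -
    have "cmod (psi u) \<le> M" using key2[of u] nu by simp
    hence "(Re (psi u))\<^sup>2 + (Im (psi u))\<^sup>2 \<le> M\<^sup>2"
      using Mpos by (metis cmod_power2 norm_ge_zero power_mono)
    hence "Im (psi u) = 0" using ReM by simp
    thus ?thesis using ReM by (simp add: complex_eq_iff)
  qed
  have orth: "cinner v u = 0" if v: "psi v = 0" for v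
  proof -
    define c where "c = cmod (cinner u v)"
    define s where "s = 1 / ((norm v)\<^sup>2 + 1)"
    define t where "t = - complex_of_real s * cinner u v"
    have sp1: "0 < (norm v)\<^sup>2 + 1" by (metis add_nonneg_pos zero_le_power2 zero_less_one)
    hence spos: "s > 0" unfolding s_def by simp
    have "psi (u + t *\<^sub>C v) = complex_of_real M" by (simp add: add sc v psiu)
    hence "M \<le> M * norm (u + t *\<^sub>C v)" using key[of "u + t *\<^sub>C v"] by simp
    hence "1 \<le> norm (u + t *\<^sub>C v)" using Mpos by simp
    hence "1 \<le> (norm (u + t *\<^sub>C v))\<^sup>2" by (simp add: one_le_power)
    also have "\<dots> = 1 + (cmod t * norm v)\<^sup>2 + 2 * Re (cnj t * cinner u v)"
      by (simp add: norm_add_sq nu norm_scaleC cinner_scaleC_right)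
    also have "cnj t * cinner u v = - complex_of_real (s * c\<^sup>2)"
    proof -
      have cc: "cnj (cinner u v) * cinner u v = (complex_of_real c)\<^sup>2" unfolding c_def
        by (metis complex_norm_square mult.commute of_real_power)
      show ?thesis by (simp add: t_def cc mult.assoc)
    qed
    also have "cmod t = s * c" using spos by (simp add: t_def c_def norm_mult)
    finally have "0 \<le> (s * c * norm v)\<^sup>2 - 2 * (s * c\<^sup>2)" by simp
    hence ge: "0 \<le> s * c\<^sup>2 * (s * (norm v)\<^sup>2 - 2)" by (simp add: power2_eq_square algebra_simps)
    have "s * (norm v)\<^sup>2 < 1" unfolding s_def using sp1 by (simp add: divide_less_eq)
    hence neg: "s * (norm v)\<^sup>2 - 2 < 0" by linarith
    have "s * c\<^sup>2 \<le> 0"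
    proof (rule ccontr)
      assume "\<not> s * c\<^sup>2 \<le> 0"
      hence "0 < s * c\<^sup>2" by simp
      hence "s * c\<^sup>2 * (s * (norm v)\<^sup>2 - 2) < 0" using neg by (rule mult_pos_neg)
      thus False using ge by linarith
    qed
    hence "c\<^sup>2 \<le> 0" using spos by (simp add: mult_le_0_iff)
    hence "c = 0" by simp
    thus ?thesis unfolding c_def by (metis cinner_commute complex_cnj_zero norm_eq_zero)
  qed
  show ?thesis
  proof (intro exI allI)
    fix f
    define w where "w = psi f *\<^sub>C u - complex_of_real M *\<^sub>C f"
    have "psi w = 0" by (simp add: w_def psidiff sc psiu)
    hence "cinner w u = 0" by (rule orth)
    hence "psi f * cinner u u = complex_of_real M * cinner f u"
      by (simp add: w_def cinner_diff_left cinner_scaleC_left)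
    hence "psi f = complex_of_real M * cinner f u" by (simp add: cinner_self nu)
    thus "psi f = cinner f (complex_of_real M *\<^sub>C u)" by (simp add: cinner_scaleC_right)
  qed
qed


lemma dense_agree:
  fixes F G :: "'a::metric_space \<Rightarrow> 'b::t2_space"
  assumes "closure D = UNIV" "continuous_on UNIV F" "continuous_on UNIV G" "\<And>x. x \<in> D \<Longrightarrow> F x = G x"
  shows "F x = G x"
proof -
  have "closed {x. F x = G x}" by (rule closed_Collect_eq[OF assms(2,3)])
  moreover have "D \<subseteq> {x. F x = G x}" using assms(4) by blast
  ultimately have "closure D \<subseteq> {x. F x = G x}" by (rule closure_minimal[rotated])
  thus ?thesis using assms(1) by blast
qed

lemma dense_le:
  fixes F G :: "'a::metric_space \<Rightarrow> real"
  assumes "closure D = UNIV" "continuous_on UNIV F" "continuous_on UNIV G" "\<And>x. x \<in> D \<Longrightarrow> F x \<le> G x"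
  shows "F x \<le> G x"
proof -
  have "closed {x. F x \<le> G x}" by (rule closed_Collect_le[OF assms(2,3)])
  moreover have "D \<subseteq> {x. F x \<le> G x}" using assms(4) by blast
  ultimately have "closure D \<subseteq> {x. F x \<le> G x}" by (rule closure_minimal[rotated])
  thus ?thesis using assms(1) by blast
qed

lemma bl_scaleC: "bounded_linear (\<lambda>x::'a::complex_inner. c *\<^sub>C x)"
  by (rule bounded_linear_intro[of _ "cmod c"])
     (auto simp: scaleC_add_right scaleR_scaleC scaleC_scaleC mult.commute norm_scaleC)

lemma bl_cinner:
  fixes h :: "'a::complex_inner"
  assumes "\<And>x. cmod (cinner h x) \<le> K * norm x"
  shows "bounded_linear (\<lambda>x. cinner x h)"
proof (rule bounded_linear_intro[of _ K])
  show "cinner (x + y) h = cinner x h + cinner y h" for x y by (rule cinner_add_left)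
  show "cinner (r *\<^sub>R x) h = r *\<^sub>R cinner x h" for r x
    by (simp add: scaleR_scaleC cinner_scaleC_left scaleR_conv_of_real)
  show "norm (cinner x h) \<le> norm x * K" for x
    using assms[of x] by (metis cinner_commute complex_mod_cnj mult.commute)
qed

lemma ext_repr:
  fixes D :: "'a::{complex_inner,complete_space} set"
  assumes sub: "csubspace D" and dense: "closure D = UNIV"
    and cl: "conj_linear_on D phi" and bnd: "\<And>f. f \<in> D \<Longrightarrow> cmod (phi f) \<le> K * norm f"
    and K0: "0 \<le> K"
  shows "\<exists>h. (\<forall>f\<in>D. phi f = cinner h f) \<and> (\<forall>x. cmod (cinner h x) \<le> K * norm x)"
proof -
  have addD: "x \<in> D \<Longrightarrow> y \<in> D \<Longrightarrow> x + y \<in> D" for x y using sub by (simp add: csubspace_def)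
  have scD: "x \<in> D \<Longrightarrow> c *\<^sub>C x \<in> D" for c x using sub by (simp add: csubspace_def)
  have diffD: "x \<in> D \<Longrightarrow> y \<in> D \<Longrightarrow> x - y \<in> D" for x y
    using addD[of x "(-1) *\<^sub>C y"] scD[of y "-1"] by (simp add: minus_scaleC[symmetric])
  have padd: "x \<in> D \<Longrightarrow> y \<in> D \<Longrightarrow> phi (x + y) = phi x + phi y" for x y
    using cl by (simp add: conj_linear_on_def)
  have psc: "x \<in> D \<Longrightarrow> phi (c *\<^sub>C x) = cnj c * phi x" for c x
    using cl by (simp add: conj_linear_on_def)
  have pdiff: "x \<in> D \<Longrightarrow> y \<in> D \<Longrightarrow> phi (x - y) = phi x - phi y" for x y
    using padd[of "x - y" y] diffD by simp
  have "uniformly_continuous_on D phi"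
    unfolding uniformly_continuous_on_def
  proof (intro allI impI)
    fix e :: real assume e: "0 < e"
    show "\<exists>d>0. \<forall>x\<in>D. \<forall>x'\<in>D. dist x' x < d \<longrightarrow> dist (phi x') (phi x) < e"
    proof (intro exI[of _ "e / (K + 1)"] conjI ballI impI)
      show "0 < e / (K + 1)" using e K0 by simp
      fix x x' assume xx: "x \<in> D" "x' \<in> D" "dist x' x < e / (K + 1)"
      have "dist (phi x') (phi x) = cmod (phi x' - phi x)" by (simp add: dist_norm)
      also have "\<dots> = cmod (phi (x' - x))" using pdiff[OF xx(2) xx(1)] by simp
      also have "\<dots> \<le> K * norm (x' - x)" using xx by (intro bnd diffD)
      also have "\<dots> \<le> K * (e / (K + 1))"
      proof -
        have "norm (x' - x) \<le> e / (K + 1)" using xx(3) by (simp add: dist_norm)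
        thus ?thesis by (rule mult_left_mono[OF _ K0])
      qed
      also have "\<dots> = e * (K / (K + 1))" by simp
      also have "\<dots> < e * 1"
      proof (rule mult_strict_left_mono[OF _ e])
        show "K / (K + 1) < 1" using K0 by simp
      qed
      also have "\<dots> = e" by simp
      finally show "dist (phi x') (phi x) < e" .
    qed
  qed
  obtain g where gc: "uniformly_continuous_on (closure D) g" and gD: "\<And>x. x \<in> D \<Longrightarrow> phi x = g x"
    by (rule uniformly_continuous_on_extension_on_closure[OF \<open>uniformly_continuous_on D phi\<close>]) (rule that; assumption)
  have gcont: "continuous_on UNIV g" using uniformly_continuous_imp_continuous[OF gc] unfolding dense .
  have cscale: "continuous_on UNIV (\<lambda>x::'a. c *\<^sub>C x)" for c by (rule linear_continuous_on[OF bl_scaleC])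
  have cg: "continuous_on UNIV (\<lambda>x. g (f x))" if "continuous_on UNIV f" for f :: "'a \<Rightarrow> 'a"
    using continuous_on_compose2[OF gcont that] by simp
  have gadd1: "g (x + y) = g x + g y" if y: "y \<in> D" for x y
  proof (rule dense_agree[OF dense, where F = "\<lambda>x. g (x + y)" and G = "\<lambda>x. g x + g y"])
    show "continuous_on UNIV (\<lambda>x. g (x + y))" by (rule cg[OF continuous_on_add[OF continuous_on_id continuous_on_const]])
    show "continuous_on UNIV (\<lambda>x. g x + g y)" by (rule continuous_on_add[OF gcont continuous_on_const])
    fix x assume x: "x \<in> D"
    show "g (x + y) = g x + g y" using gD[of "x+y"] gD[of x] gD[of y] padd[OF x y] addD[OF x y] x y by simp
  qed
  have gadd: "g (x + y) = g x + g y" for x y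
  proof (rule dense_agree[OF dense, where F = "\<lambda>y. g (x + y)" and G = "\<lambda>y. g x + g y"])
    show "continuous_on UNIV (\<lambda>y. g (x + y))" by (rule cg[OF continuous_on_add[OF continuous_on_const continuous_on_id]])
    show "continuous_on UNIV (\<lambda>y. g x + g y)" by (rule continuous_on_add[OF continuous_on_const gcont])
    fix y assume "y \<in> D" thus "g (x + y) = g x + g y" by (rule gadd1)
  qed
  have gsc: "g (c *\<^sub>C x) = cnj c * g x" for c x
  proof (rule dense_agree[OF dense, where F = "\<lambda>x. g (c *\<^sub>C x)" and G = "\<lambda>x. cnj c * g x"])
    show "continuous_on UNIV (\<lambda>x. g (c *\<^sub>C x))" by (rule cg) (rule cscale)
    show "continuous_on UNIV (\<lambda>x. cnj c * g x)" by (rule continuous_on_mult[OF continuous_on_const gcont])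
    fix x assume x: "x \<in> D"
    show "g (c *\<^sub>C x) = cnj c * g x" using gD[of "c *\<^sub>C x"] gD[of x] psc[OF x] scD[OF x] x by simp
  qed
  have gbnd: "cmod (g x) \<le> K * norm x" for x
  proof (rule dense_le[OF dense, where F = "\<lambda>x. cmod (g x)" and G = "\<lambda>x. K * norm x"])
    show "continuous_on UNIV (\<lambda>x. cmod (g x))" by (rule continuous_on_norm[OF gcont])
    show "continuous_on UNIV (\<lambda>x::'a. K * norm x)"
      by (rule continuous_on_mult[OF continuous_on_const continuous_on_norm[OF continuous_on_id]])
    fix x assume x: "x \<in> D"
    show "cmod (g x) \<le> K * norm x" using gD[OF x] bnd[OF x] by simp
  qed
  obtain h where h: "\<And>x. cnj (g x) = cinner x h"
    using riesz[of "\<lambda>x. cnj (g x)" K] by (auto simp: gadd gsc gbnd)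
  have "g x = cinner h x" for x using h[of x] by (metis cinner_commute complex_cnj_cnj)
  thus ?thesis using gD gbnd by auto
qed


lemma bessel_part:
  fixes D :: "'h::{complex_inner, complete_space} set"
    and \<omega> :: "nat \<Rightarrow> 'h \<Rightarrow> complex"
  assumes rhs: "rigged_hilbert_space D P"
    and bes: "bessel_distribution_map P D (count_space UNIV) \<omega> B"
  shows "(\<forall>f\<in>D. summable (\<lambda>n. (cmod (\<omega> n f))\<^sup>2) \<and> (\<Sum>n. (cmod (\<omega> n f))\<^sup>2) \<le> B * (norm f)\<^sup>2)
    \<and> (\<forall>n. \<exists>C. \<forall>f\<in>D. cmod (\<omega> n f) \<le> C * norm f)
    \<and> (\<exists>h :: nat \<Rightarrow> 'h. (\<forall>n. \<forall>f\<in>D. \<omega> n f = cinner (h n) f) \<and> bessel_sequence h B)"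
proof -
  have sub: "csubspace D" and dense: "closure D = UNIV" using rhs by (auto simp: rigged_hilbert_space_def)
  have Bpos: "B > 0" using bes by (simp add: bessel_distribution_map_def)
  have dual: "\<omega> n \<in> dual_space P D" for n using bes by (simp add: bessel_distribution_map_def)
  have ineq: "f \<in> D \<Longrightarrow> (\<Sum>n. ennreal ((cmod (\<omega> n f))\<^sup>2)) \<le> ennreal (B * (norm f)\<^sup>2)" for f
    using bes by (simp add: bessel_distribution_map_def nn_integral_count_space_nat)
  have summ: "f \<in> D \<Longrightarrow> summable (\<lambda>n. (cmod (\<omega> n f))\<^sup>2) \<and> (\<Sum>n. (cmod (\<omega> n f))\<^sup>2) \<le> B * (norm f)\<^sup>2" for f
  proof -
    assume f: "f \<in> D"
    have nt: "(\<Sum>n. ennreal ((cmod (\<omega> n f))\<^sup>2)) \<noteq> top"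
      using ineq[OF f] by (metis ennreal_neq_top neq_top_trans)
    have s: "summable (\<lambda>n. (cmod (\<omega> n f))\<^sup>2)" by (rule summable_suminf_not_top[OF _ nt]) simp
    have e: "(\<Sum>n. ennreal ((cmod (\<omega> n f))\<^sup>2)) = ennreal (\<Sum>n. (cmod (\<omega> n f))\<^sup>2)"
      by (rule suminf_ennreal2[OF _ s]) simp
    have "ennreal (\<Sum>n. (cmod (\<omega> n f))\<^sup>2) \<le> ennreal (B * (norm f)\<^sup>2)"
      using ineq[OF f] unfolding e .
    moreover have "0 \<le> B * (norm f)\<^sup>2" using Bpos by simp
    ultimately have "(\<Sum>n. (cmod (\<omega> n f))\<^sup>2) \<le> B * (norm f)\<^sup>2" using ennreal_le_iff by blast
    thus ?thesis using s by blast
  qed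
  have pt: "cmod (\<omega> n f) \<le> sqrt B * norm f" if f: "f \<in> D" for n f
  proof -
    have "(cmod (\<omega> n f))\<^sup>2 \<le> (\<Sum>n. (cmod (\<omega> n f))\<^sup>2)"
      using sum_le_suminf[of "\<lambda>n. (cmod (\<omega> n f))\<^sup>2" "{n}"] summ[OF f] by simp
    also have "\<dots> \<le> B * (norm f)\<^sup>2" using summ[OF f] by simp
    also have "\<dots> = (sqrt B * norm f)\<^sup>2" using Bpos by (simp add: power_mult_distrib)
    finally have "(cmod (\<omega> n f))\<^sup>2 \<le> (sqrt B * norm f)\<^sup>2" .
    moreover have "0 \<le> sqrt B * norm f" using Bpos by simp
    ultimately show ?thesis by (rule power2_le_imp_le)
  qed
  have "\<exists>h. (\<forall>f\<in>D. \<omega> n f = cinner h f) \<and> (\<forall>x. cmod (cinner h x) \<le> sqrt B * norm x)" for n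
    by (rule ext_repr[OF sub dense]) (use dual[of n] pt Bpos in \<open>auto simp: dual_space_def\<close>)
  then obtain h where h1: "\<And>n f. f \<in> D \<Longrightarrow> \<omega> n f = cinner (h n) f"
    and h2: "\<And>n x. cmod (cinner (h n) x) \<le> sqrt B * norm x" by metis
  have hcont: "continuous_on UNIV (\<lambda>f. cinner f (h n))" for n
    by (rule linear_continuous_on[OF bl_cinner[OF h2]])
  have psum: "(\<Sum>n<N. (cmod (cinner f (h n)))\<^sup>2) \<le> B * (norm f)\<^sup>2" for N f
  proof (rule dense_le[OF dense, where F = "\<lambda>f. (\<Sum>n<N. (cmod (cinner f (h n)))\<^sup>2)"])
    show "continuous_on UNIV (\<lambda>f. \<Sum>n<N. (cmod (cinner f (h n)))\<^sup>2)"
      by (intro continuous_intros continuous_on_compose2[OF continuous_on_norm_id hcont]) auto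
    show "continuous_on UNIV (\<lambda>f::'h. B * (norm f)\<^sup>2)" by (intro continuous_intros)
    fix f assume f: "f \<in> D"
    have "(\<Sum>n<N. (cmod (cinner f (h n)))\<^sup>2) = (\<Sum>n<N. (cmod (\<omega> n f))\<^sup>2)"
      using f h1 by (metis cinner_commute complex_mod_cnj)
    also have "\<dots> \<le> (\<Sum>n. (cmod (\<omega> n f))\<^sup>2)" using summ[OF f] by (intro sum_le_suminf) auto
    also have "\<dots> \<le> B * (norm f)\<^sup>2" using summ[OF f] by simp
    finally show "(\<Sum>n<N. (cmod (cinner f (h n)))\<^sup>2) \<le> B * (norm f)\<^sup>2" .
  qed
  have "bessel_sequence h B" unfolding bessel_sequence_def
  proof
    fix f
    have s: "summable (\<lambda>n. (cmod (cinner f (h n)))\<^sup>2)"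
      by (rule summableI_nonneg_bounded[OF _ psum]) simp
    show "summable (\<lambda>n. (cmod (cinner f (h n)))\<^sup>2) \<and> (\<Sum>n. (cmod (cinner f (h n)))\<^sup>2) \<le> B * (norm f)\<^sup>2"
      using s suminf_le_const[OF s psum] by simp
  qed
  hence c3: "\<exists>h :: nat \<Rightarrow> 'h. (\<forall>n. \<forall>f\<in>D. \<omega> n f = cinner (h n) f) \<and> bessel_sequence h B"
    using h1 by blast
  have c1: "\<forall>f\<in>D. summable (\<lambda>n. (cmod (\<omega> n f))\<^sup>2) \<and> (\<Sum>n. (cmod (\<omega> n f))\<^sup>2) \<le> B * (norm f)\<^sup>2"
    using summ by blast
  have c2: "\<forall>n. \<exists>C. \<forall>f\<in>D. cmod (\<omega> n f) \<le> C * norm f" using pt by blast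
  show ?thesis using c1 c2 c3 by (intro conjI)
qed


lemma frame_ext:
  fixes h :: "nat \<Rightarrow> 'h::complex_inner"
  assumes bs: "bessel_sequence h B" and B: "B > 0" and A: "A > 0" and dense: "closure D = UNIV"
    and low: "\<And>f. f \<in> D \<Longrightarrow> A * (norm f)\<^sup>2 \<le> (\<Sum>n. (cmod (cinner f (h n)))\<^sup>2)"
  shows "A * (norm f)\<^sup>2 \<le> (\<Sum>n. (cmod (cinner f (h n)))\<^sup>2)"
proof -
  define T where "T f = (\<Sum>n. (cmod (cinner f (h n)))\<^sup>2)" for f
  have sT: "summable (\<lambda>n. (cmod (cinner f (h n)))\<^sup>2)" for f using bs by (simp add: bessel_sequence_def)
  have TB: "T f \<le> B * (norm f)\<^sup>2" for f using bs by (simp add: bessel_sequence_def T_def)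
  have T0: "0 \<le> T f" for f unfolding T_def by (intro suminf_nonneg[OF sT]) simp
  have Tpart: "L2_set (\<lambda>n. cmod (cinner f (h n))) {..<N} \<le> sqrt (T f)" for f N
    unfolding L2_set_def T_def by (intro real_sqrt_le_mono sum_le_suminf[OF sT]) auto
  have tri: "sqrt (T g) \<le> sqrt (T f) + sqrt (T (g - f))" for f g
  proof -
    have "(\<Sum>n<N. (cmod (cinner g (h n)))\<^sup>2) \<le> (sqrt (T f) + sqrt (T (g - f)))\<^sup>2" for N
    proof -
      have "L2_set (\<lambda>n. cmod (cinner g (h n))) {..<N}
          \<le> L2_set (\<lambda>n. cmod (cinner f (h n)) + cmod (cinner (g - f) (h n))) {..<N}"
      proof (rule L2_set_mono)
        fix n
        have "cinner g (h n) = cinner f (h n) + cinner (g - f) (h n)"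
          by (simp add: cinner_diff_left)
        thus "cmod (cinner g (h n)) \<le> cmod (cinner f (h n)) + cmod (cinner (g - f) (h n))"
          by (metis norm_triangle_ineq)
      qed simp
      also have "\<dots> \<le> L2_set (\<lambda>n. cmod (cinner f (h n))) {..<N} + L2_set (\<lambda>n. cmod (cinner (g - f) (h n))) {..<N}"
        by (rule L2_set_triangle_ineq)
      also have "\<dots> \<le> sqrt (T f) + sqrt (T (g - f))" using Tpart by (intro add_mono)
      finally have "sqrt (\<Sum>n<N. (cmod (cinner g (h n)))\<^sup>2) \<le> sqrt (T f) + sqrt (T (g - f))"
        by (simp add: L2_set_def)
      thus ?thesis by (metis real_sqrt_le_iff real_sqrt_pow2 sum_nonneg zero_le_power2 power_mono real_sqrt_ge_zero)
    qed
    hence "T g \<le> (sqrt (T f) + sqrt (T (g - f)))\<^sup>2" unfolding T_def by (rule suminf_le_const[OF sT])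
    thus ?thesis by (metis T0 add_nonneg_nonneg real_sqrt_abs real_sqrt_le_mono abs_of_nonneg real_sqrt_ge_zero)
  qed
  have "sqrt A * norm f \<le> sqrt (T f)"
  proof (rule field_le_epsilon)
    fix e :: real assume e: "0 < e"
    define d where "d = e / (sqrt A + sqrt B)"
    have sAB: "0 < sqrt A + sqrt B" using A B by (simp add: add_pos_pos)
    have dpos: "d > 0" unfolding d_def using e sAB by (rule divide_pos_pos)
    obtain g where g: "g \<in> D" "dist g f < d" using dense closure_approachable[of f D] dpos by blast
    have ngf: "norm (g - f) < d" using g by (simp add: dist_norm)
    have "sqrt A * norm f \<le> sqrt A * (norm g + norm (g - f))"
      using A by (intro mult_left_mono) (auto simp: norm_triangle_sub[of f g] norm_minus_commute)
    also have "\<dots> = sqrt (A * (norm g)\<^sup>2) + sqrt A * norm (g - f)"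
      using A by (simp add: real_sqrt_mult algebra_simps)
    also have "sqrt (A * (norm g)\<^sup>2) \<le> sqrt (T g)" using low[OF g(1)] by (simp add: T_def)
    also have "sqrt (T g) \<le> sqrt (T f) + sqrt (T (g - f))" by (rule tri)
    also have "sqrt (T (g - f)) \<le> sqrt B * norm (g - f)"
      using TB[of "g - f"] B by (metis norm_ge_zero real_sqrt_abs real_sqrt_le_mono real_sqrt_mult abs_of_nonneg)
    finally have "sqrt A * norm f \<le> sqrt (T f) + (sqrt A + sqrt B) * norm (g - f)" by (simp add: algebra_simps)
    also have "(sqrt A + sqrt B) * norm (g - f) \<le> (sqrt A + sqrt B) * d"
      using ngf A B by (intro mult_left_mono) auto
    also have "(sqrt A + sqrt B) * d = e" using sAB by (simp add: d_def)
    finally show "sqrt A * norm f \<le> sqrt (T f) + e" by simp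
  qed
  moreover have "0 \<le> sqrt A * norm f" using A by simp
  ultimately have "(sqrt A * norm f)\<^sup>2 \<le> (sqrt (T f))\<^sup>2" by (rule power_mono)
  hence "(sqrt A * norm f)\<^sup>2 \<le> T f" using T0[of f] by simp
  thus ?thesis using A by (simp add: power_mult_distrib T_def)
qed

theorem proposition2p7:
  fixes D :: "'h::{complex_inner, complete_space} set"
    and P :: "('h \<Rightarrow> real) set"
    and \<omega> :: "nat \<Rightarrow> 'h \<Rightarrow> complex"
    and A B :: real
  assumes rhs: "rigged_hilbert_space D P"
    and refl: "reflexive_lcs P D"
  shows "(bessel_distribution_map P D (count_space UNIV) \<omega> B \<longrightarrow>
           (\<forall>n. \<exists>C. \<forall>f\<in>D. cmod (\<omega> n f) \<le> C * norm f)
         \<and> (\<exists>h :: nat \<Rightarrow> 'h. (\<forall>n. \<forall>f\<in>D. \<omega> n f = cinner (h n) f) \<and> bessel_sequence h B))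
       \<and> (distribution_frame P D (count_space UNIV) \<omega> A B \<longrightarrow>
           (\<forall>n. \<exists>C. \<forall>f\<in>D. cmod (\<omega> n f) \<le> C * norm f)
         \<and> (\<exists>h :: nat \<Rightarrow> 'h. (\<forall>n. \<forall>f\<in>D. \<omega> n f = cinner (h n) f) \<and> frame_sequence h A B))"
proof (intro conjI impI)
  assume "bessel_distribution_map P D (count_space UNIV) \<omega> B"
  from bessel_part[OF rhs this] show "\<forall>n. \<exists>C. \<forall>f\<in>D. cmod (\<omega> n f) \<le> C * norm f"
    and "\<exists>h :: nat \<Rightarrow> 'h. (\<forall>n. \<forall>f\<in>D. \<omega> n f = cinner (h n) f) \<and> bessel_sequence h B" by blast+
next
  assume fr: "distribution_frame P D (count_space UNIV) \<omega> A B"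
  hence bes: "bessel_distribution_map P D (count_space UNIV) \<omega> B" and A: "A > 0"
    and lowD: "\<And>f. f \<in> D \<Longrightarrow> ennreal (A * (norm f)\<^sup>2) \<le> (\<Sum>n. ennreal ((cmod (\<omega> n f))\<^sup>2))"
    by (auto simp: distribution_frame_def nn_integral_count_space_nat)
  have B: "B > 0" using bes by (simp add: bessel_distribution_map_def)
  have dense: "closure D = UNIV" using rhs by (simp add: rigged_hilbert_space_def)
  note bp = bessel_part[OF rhs bes]
  show "\<forall>n. \<exists>C. \<forall>f\<in>D. cmod (\<omega> n f) \<le> C * norm f" using bp by blast
  from bp obtain h where h1: "\<And>n f. f \<in> D \<Longrightarrow> \<omega> n f = cinner (h n) f" and hb: "bessel_sequence h B" by blast
  have low: "A * (norm f)\<^sup>2 \<le> (\<Sum>n. (cmod (cinner f (h n)))\<^sup>2)" if f: "f \<in> D" for f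
  proof -
    have eq: "cmod (cinner f (h n)) = cmod (\<omega> n f)" for n
      using h1[OF f] by (metis cinner_commute complex_mod_cnj)
    have s: "summable (\<lambda>n. (cmod (\<omega> n f))\<^sup>2)" using bp f by blast
    have e: "(\<Sum>n. ennreal ((cmod (\<omega> n f))\<^sup>2)) = ennreal (\<Sum>n. (cmod (\<omega> n f))\<^sup>2)"
      by (rule suminf_ennreal2[OF _ s]) simp
    have "ennreal (A * (norm f)\<^sup>2) \<le> ennreal (\<Sum>n. (cmod (\<omega> n f))\<^sup>2)"
      using lowD[OF f] unfolding e .
    moreover have "0 \<le> (\<Sum>n. (cmod (\<omega> n f))\<^sup>2)" by (rule suminf_nonneg[OF s]) simp
    ultimately have "A * (norm f)\<^sup>2 \<le> (\<Sum>n. (cmod (\<omega> n f))\<^sup>2)" using ennreal_le_iff by blast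
    thus ?thesis by (simp add: eq)
  qed
  have "frame_sequence h A B" unfolding frame_sequence_def
    using hb frame_ext[OF hb B A dense low] by blast
  thus "\<exists>h :: nat \<Rightarrow> 'h. (\<forall>n. \<forall>f\<in>D. \<omega> n f = cinner (h n) f) \<and> frame_sequence h A B"
    using h1 by blast
qed

end
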